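(* Let $\alpha<0$ and $U(x)=-x^\alpha$ on $(0,\infty)$. Let $\pi_t$ be a trading strategy such that $|\mathbb{E}U(V_t^\pi)|\le Ke^{-ct}$ for all sufficiently large $t$, for some constants $c,K>0$. Then $\pi_t$ generates an asymptotic exponential arbitrage with geometrically decaying probability of failure, i.e. there are $b>0$, $c'>0$ with $\mathbb{P}(V_t^\pi\ge e^{bt})\ge1-e^{-c't}$ for all sufficiently large $t$.
   Context: Setting: $X_t$ is a real-valued process on a filtered probability space with filtration $\mathcal{F}_t=\sigma(X_s,s\le t)$, $S_t=e^{X_t}$. A trading strategy is a predictable $[0,1]$-valued process $(\pi_t)_{t\ge1}$; its wealth is $V_0^\pi=V_0>0$, $V_t^\pi=V_{t-1}^\pi((1-\pi_t)+\pi_tS_t/S_{t-1})$ (so $V_t^\pi>0$). *)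

theory Defs
  imports "HOL-Probability.Probability"
begin

definition nat_filtration :: "'a measure \<Rightarrow> (nat \<Rightarrow> 'a \<Rightarrow> real) \<Rightarrow> nat \<Rightarrow> 'a measure" where
  "nat_filtration M X t =
     sigma (space M) {X s -` A \<inter> space M | s A. s \<le> t \<and> A \<in> sets (borel :: real measure)}"

definition price :: "(nat \<Rightarrow> 'a \<Rightarrow> real) \<Rightarrow> nat \<Rightarrow> 'a \<Rightarrow> real" where
  "price X t \<omega> = exp (X t \<omega>)"

primrec wealth :: "real \<Rightarrow> (nat \<Rightarrow> 'a \<Rightarrow> real) \<Rightarrow> (nat \<Rightarrow> 'a \<Rightarrow> real) \<Rightarrow> nat \<Rightarrow> 'a \<Rightarrow> real" where
  "wealth V0 X \<pi> 0 \<omega> = V0"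
| "wealth V0 X \<pi> (Suc t) \<omega> = wealth V0 X \<pi> t \<omega> *
     ((1 - \<pi> (Suc t) \<omega>) + \<pi> (Suc t) \<omega> * price X (Suc t) \<omega> / price X t \<omega>)"

definition trading_strategy :: "'a measure \<Rightarrow> (nat \<Rightarrow> 'a \<Rightarrow> real) \<Rightarrow> (nat \<Rightarrow> 'a \<Rightarrow> real) \<Rightarrow> bool" where
  "trading_strategy M X \<pi> \<longleftrightarrow>
     (\<forall>t. \<pi> (Suc t) \<in> borel_measurable (nat_filtration M X t)) \<and>
     (\<forall>t\<ge>1. \<forall>\<omega>\<in>space M. 0 \<le> \<pi> t \<omega> \<and> \<pi> t \<omega> \<le> 1)"

definition power_utility :: "real \<Rightarrow> real \<Rightarrow> real" where
  "power_utility \<alpha> x = - (x powr \<alpha>)"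

end

theory Submission
  imports Defs
begin

lemma wealth_pos:
  assumes "V0 > 0" "trading_strategy M X \<pi>" "\<omega> \<in> space M"
  shows "wealth V0 X \<pi> t \<omega> > 0"
proof (induction t)
  case 0 then show ?case using assms by simp
next
  case (Suc t)
  have p: "0 \<le> \<pi> (Suc t) \<omega>" "\<pi> (Suc t) \<omega> \<le> 1"
    using assms(2,3) unfolding trading_strategy_def by auto
  have r: "price X (Suc t) \<omega> / price X t \<omega> > 0" by (simp add: price_def)
  have "(1 - \<pi> (Suc t) \<omega>) + \<pi> (Suc t) \<omega> * price X (Suc t) \<omega> / price X t \<omega> > 0"
  proof (cases "\<pi> (Suc t) \<omega> = 1")
    case True then show ?thesis using r by simp
  next
    case False
    have "\<pi> (Suc t) \<omega> * price X (Suc t) \<omega> / price X t \<omega> \<ge> 0"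
      using p r by (simp add: price_def)
    then show ?thesis using p False by linarith
  qed
  then show ?case using Suc by simp
qed

theorem theoremt3p5:
  fixes M :: "'a measure" and X \<pi> :: "nat \<Rightarrow> 'a \<Rightarrow> real" and V0 \<alpha> :: real
  assumes "prob_space M"
    and "\<And>t. X t \<in> borel_measurable M"
    and "V0 > 0"
    and "\<alpha> < 0"
    and "trading_strategy M X \<pi>"
    and "\<exists>c K. c > 0 \<and> K > 0 \<and> (\<forall>\<^sub>F t in sequentially.
            integrable M (\<lambda>\<omega>. power_utility \<alpha> (wealth V0 X \<pi> t \<omega>)) \<and>
            \<bar>prob_space.expectation M (\<lambda>\<omega>. power_utility \<alpha> (wealth V0 X \<pi> t \<omega>))\<bar>
              \<le> K * exp (- c * real t))"
  shows "\<exists>b c'. b > 0 \<and> c' > 0 \<and> (\<forall>\<^sub>F t in sequentially.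
            measure M {\<omega> \<in> space M. wealth V0 X \<pi> t \<omega> \<ge> exp (b * real t)}
              \<ge> 1 - exp (- c' * real t))"
proof -
  interpret P: prob_space M by fact
  obtain c K where cK: "c > 0" "K > 0" and ev: "\<forall>\<^sub>F t in sequentially.
            integrable M (\<lambda>\<omega>. power_utility \<alpha> (wealth V0 X \<pi> t \<omega>)) \<and>
            \<bar>P.expectation (\<lambda>\<omega>. power_utility \<alpha> (wealth V0 X \<pi> t \<omega>))\<bar>
              \<le> K * exp (- c * real t)" using assms(6) by blast
  define b where "b = c / (-2 * \<alpha>)"
  have b: "b > 0" using cK assms(4) by (simp add: b_def divide_pos_neg)
  have ab: "\<alpha> * b = - c / 2" using assms(4) by (simp add: b_def field_simps)
  have ev2: "\<forall>\<^sub>F t in sequentially. real t \<ge> 4 * ln K / c" by real_asymp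
  have "\<forall>\<^sub>F t in sequentially.
            measure M {\<omega> \<in> space M. wealth V0 X \<pi> t \<omega> \<ge> exp (b * real t)}
              \<ge> 1 - exp (- (c/4) * real t)"
    using ev ev2
  proof eventually_elim
    case (elim t)
    define V where "V = (\<lambda>\<omega>. wealth V0 X \<pi> t \<omega>)"
    define g where "g = (\<lambda>\<omega>. V \<omega> powr \<alpha>)"
    define s where "s = exp (b * real t) powr \<alpha>"
    have Vpos: "\<And>\<omega>. \<omega> \<in> space M \<Longrightarrow> V \<omega> > 0"
      unfolding V_def using wealth_pos[OF assms(3,5)] by blast
    have ig: "integrable M g"
      using integrable_minus[OF elim(1)[THEN conjunct1]]
      by (simp add: g_def V_def power_utility_def)
    have gm: "g \<in> borel_measurable M" using ig by auto
    have Eg: "P.expectation g \<le> K * exp (- c * real t)"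
    proof -
      have "P.expectation (\<lambda>\<omega>. power_utility \<alpha> (wealth V0 X \<pi> t \<omega>)) = - P.expectation g"
        by (simp add: g_def V_def power_utility_def)
      then show ?thesis using elim(1) by linarith
    qed
    have s: "s = exp (- c / 2 * real t)"
      proof -
      have "\<alpha> * (b * real t) = - c / 2 * real t" using ab by (simp add: mult.assoc[symmetric])
      then show ?thesis unfolding s_def powr_def by (simp add: mult.commute)
    qed
    have spos: "s > 0" by (simp add: s_def)
    have mk: "measure M {x\<in>space M. g x \<ge> s} \<le> P.expectation g / s"
      by (rule integral_Markov_inequality_measure[OF ig, where A="space M"])
         (auto simp: g_def spos)
    have "P.expectation g / s \<le> K * exp (- c * real t) / s"
      using Eg spos by (simp add: divide_right_mono)
    also have "\<dots> = K * exp (- c / 2 * real t)"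
      using s by (simp add: field_simps flip: exp_add)
    also have "\<dots> \<le> exp (- (c/4) * real t)"
    proof -
      have "ln K \<le> c / 4 * real t" using elim(2) cK by (simp add: field_simps)
      then have "K \<le> exp (c/4 * real t)" using cK
        by (metis exp_le_cancel_iff exp_ln)
      then have "K * exp (- c / 2 * real t) \<le> exp (c/4 * real t) * exp (- c / 2 * real t)"
        by simp
      also have "\<dots> = exp (- (c/4) * real t)" by (simp flip: exp_add)
      finally show ?thesis .
    qed
    finally have B: "measure M {x\<in>space M. g x \<ge> s} \<le> exp (- (c/4) * real t)"
      using mk by linarith
    have eqA: "{\<omega> \<in> space M. V \<omega> \<ge> exp (b * real t)} = {x\<in>space M. g x \<le> s}"
    proof (intro Collect_cong conj_cong refl)
      fix \<omega> assume w: "\<omega> \<in> space M"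
      have e: "exp (b * real t) > 0" by simp
      show "(V \<omega> \<ge> exp (b * real t)) = (g \<omega> \<le> s)"
        unfolding g_def s_def using Vpos[OF w] e assms(4)
        by (metis linorder_not_le order_less_imp_le powr_less_mono2_neg powr_mono2')
    qed
    have Am: "{x\<in>space M. g x \<le> s} \<in> sets M" using gm by measurable
    have Bm: "{x\<in>space M. g x \<ge> s} \<in> sets M" using gm by measurable
    have "1 = measure M (space M)" by (simp add: P.prob_space)
    also have "\<dots> \<le> measure M ({x\<in>space M. g x \<le> s} \<union> {x\<in>space M. g x \<ge> s})"
      by (intro P.finite_measure_mono) (auto intro: Am Bm)
    also have "\<dots> \<le> measure M {x\<in>space M. g x \<le> s} + measure M {x\<in>space M. g x \<ge> s}"
      by (intro measure_Un_le Am Bm)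
    finally have "1 - exp (- (c/4) * real t) \<le> measure M {x\<in>space M. g x \<le> s}" using B by linarith
    then show ?case using eqA unfolding V_def by simp
  qed
  then show ?thesis using b cK by (intro exI[of _ b] exI[of _ "c/4"]) auto
qed

end
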